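(* (Integration by parts for piecewise $\mathcal{C}^1$ functions) For every $u,v\in\mathfrak{U}(\mathbb{R})$ and every $\gamma_n<\gamma_m$ in $\Gamma$, $$\int_{\gamma_n}^{\gamma_m}D_2u(x)v(x)\,dx=-\int_{\gamma_n}^{\gamma_m}u(x)D_2v(x)\,dx+\sum_{i=n}^{m-1}\left[u^-(\gamma_{i+1})v^-(\gamma_{i+1})-u^+(\gamma_i)v^+(\gamma_i)\right].$$
   Context: Framework (Λ-limits / nonstandard analysis): $\mathfrak{X}=\mathcal{P}_{fin}(\mathfrak{F}(\mathbb{R},\mathbb{R}))$ directed by inclusion; $\mathbb{R}^*\supset\mathbb{R}$ is a non-Archimedean ordered field of Λ-limits of nets $\mathfrak{X}\to\mathbb{R}$; internal sets/functions, natural extensions $E^*,f^*$, hyperfinite sums are defined via Λ-limits; for internal $u$, $\int_a^bu\,dx$ means $(\int_a^b)^*u\,dx$. For $\lambda\in\mathfrak{X}$, $V_\lambda$ is the span of $\lambda$; an internal $u=\lim_{\lambda\uparrow\Lambda}u_\lambda$ is an ultrafunction if $u_\lambda\in V_\lambda$ for all $\lambda$; for a vector space $W$ of real functions, $\widetilde{W}=W^*\cap\{\text{ultrafunctions}\}$. Grid: a positive infinite $\beta\in\mathbb{R}^*$, a hyperfinite $\Gamma=\{\gamma_0<\dots<\gamma_\ell\}\subset\mathbb{R}^*$ with $\gamma_0=-\beta$, $\gamma_\ell=\beta$, $0<\gamma_{j+1}-\gamma_j<\eta$ for a fixed infinitesimal $\eta$, and $\mathbb{R}\subseteq\Gamma$;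 $\mathbb{I}_j=(\gamma_j,\gamma_{j+1})_{\mathbb{R}^*}$ with characteristic function $\chi_j$. $\mathfrak{U}(\mathbb{R})$: functions $u:[-\beta,\beta]\to\mathbb{R}^*$ of the form $\sum_{j=0}^{\ell-1}v_j\chi_j$ with $v_j\in\widetilde{\mathcal{C}^1(\mathbb{R})}$, with the $L^2$ inner product $\int^*uv$; $u^\pm(\gamma_j)$ are the internal one-sided limits of $u$ at grid points. For $u=\sum_jv_j\chi_j\in\mathfrak{U}(\mathbb{R})$, $u'=\sum_jv_j'\chi_j$ (piecewise derivative) and $D_2u=P_{\mathfrak{U}}(u')$, where $P_{\mathfrak{U}}$ is the orthogonal projection onto $\mathfrak{U}(\mathbb{R})$ in $[L^2(\mathbb{R})]^*$. *)

theory Defs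
  imports "HOL-Analysis.Analysis"
begin

text \<open>Index set of the Lambda-limits: finite sets of real functions (the finiteness
  is imposed through the ultrafilter, which is concentrated on finite sets).
  An internal object is represented by a net indexed by this type; two nets have the
  same Lambda-limit iff they agree eventually w.r.t. the ultrafilter (ultrapower
  semantics of Lambda-limits).\<close>
type_synonym idx = "(real \<Rightarrow> real) set"

definition fine_ultrafilter :: "idx filter \<Rightarrow> bool" where
  "fine_ultrafilter F \<longleftrightarrow>
     F \<noteq> bot \<and>
     (\<forall>P. eventually P F \<or> eventually (\<lambda>l. \<not> P l) F) \<and>
     eventually finite F \<and>
     (\<forall>\<mu>. finite \<mu> \<longrightarrow> eventually (\<lambda>l. \<mu> \<subseteq> l) F)"

definition Vspan :: "idx \<Rightarrow> (real \<Rightarrow> real) set" where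
  "Vspan l = {f. \<exists>c. f = (\<lambda>x. \<Sum>h\<in>l. c h * h x)}"

definition Ufun :: "idx \<Rightarrow> nat \<Rightarrow> (nat \<Rightarrow> real) \<Rightarrow> (real \<Rightarrow> real) set" where
  "Ufun l N g = {w. \<exists>vs :: nat \<Rightarrow> real \<Rightarrow> real.
      (\<forall>j<N. vs j \<in> Vspan l \<and> vs j C1_differentiable_on UNIV) \<and>
      w = (\<lambda>x. \<Sum>j<N. vs j x * indicator {g j<..<g (Suc j)} x)}"

text \<open>Piecewise derivative u' = sum of v_j' chi_j (on each open grid interval u coincides
  with v_j, so its derivative there is v_j'; it is 0 at grid points and outside).\<close>
definition pw_deriv :: "nat \<Rightarrow> (nat \<Rightarrow> real) \<Rightarrow> (real \<Rightarrow> real) \<Rightarrow> real \<Rightarrow> real" where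
  "pw_deriv N g w = (\<lambda>x. if \<exists>j<N. x \<in> {g j<..<g (Suc j)} then deriv w x else 0)"

definition L2proj :: "(real \<Rightarrow> real) set \<Rightarrow> (real \<Rightarrow> real) \<Rightarrow> real \<Rightarrow> real" where
  "L2proj S w = (THE p. p \<in> S \<and> (\<forall>q\<in>S. integral UNIV (\<lambda>x. (w x - p x) * q x) = 0))"

definition D2 :: "idx \<Rightarrow> nat \<Rightarrow> (nat \<Rightarrow> real) \<Rightarrow> (real \<Rightarrow> real) \<Rightarrow> real \<Rightarrow> real" where
  "D2 l N g u = L2proj (Ufun l N g) (pw_deriv N g u)"

end

theory Submission
  imports Defs "HOL-Library.Function_Algebras"
begin


definition pwf :: "nat \<Rightarrow> (nat \<Rightarrow> real) \<Rightarrow> (nat \<Rightarrow> real \<Rightarrow> real) \<Rightarrow> real \<Rightarrow> real" where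
  "pwf N g fs = (\<lambda>x. \<Sum>j<N. fs j x * indicator {g j<..<g (Suc j)} x)"

definition sgrid :: "nat \<Rightarrow> (nat \<Rightarrow> real) \<Rightarrow> bool" where
  "sgrid N g \<longleftrightarrow> (\<forall>j<N. g j < g (Suc j))"

lemma grid_le: assumes "sgrid N g" "i \<le> j" "j \<le> N" shows "g i \<le> g j"
  using assms(2,3)
proof (induction j)
  case 0 then show ?case by simp
next
  case (Suc j)
  show ?case
  proof (cases "i = Suc j")
    case False
    then have "g i \<le> g j" using Suc by auto
    also have "g j < g (Suc j)" using assms(1) Suc.prems unfolding sgrid_def by auto
    finally show ?thesis by simp
  qed simp
qed

lemma grid_lt: assumes "sgrid N g" "i < j" "j \<le> N" shows "g i < g j"
proof -
  have "g i < g (Suc i)" using assms unfolding sgrid_def by auto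
  also have "g (Suc i) \<le> g j" using grid_le[OF assms(1)] assms by auto
  finally show ?thesis .
qed

lemma grid_disj: assumes "sgrid N g" "j < N" "k < N" "x \<in> {g j<..<g (Suc j)}" "x \<in> {g k<..<g (Suc k)}"
  shows "j = k"
proof (rule ccontr)
  assume "j \<noteq> k"
  then consider "j < k" | "k < j" by linarith
  then show False
  proof cases
    case 1 then have "g (Suc j) \<le> g k" using grid_le[OF assms(1)] assms by auto
    then show False using assms(4,5) by auto
  next
    case 2 then have "g (Suc k) \<le> g j" using grid_le[OF assms(1)] assms by auto
    then show False using assms(4,5) by auto
  qed
qed

lemma pwf_in: assumes "sgrid N g" "j < N" "x \<in> {g j<..<g (Suc j)}"
  shows "pwf N g fs x = fs j x"
proof -
  have "pwf N g fs x = (\<Sum>k<N. if k = j then fs j x else 0)"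
    unfolding pwf_def
  proof (rule sum.cong)
    fix k assume "k \<in> {..<N}"
    show "fs k x * indicator {g k<..<g (Suc k)} x = (if k = j then fs j x else 0)"
    proof (cases "k = j")
      case True then show ?thesis using assms(3) by simp
    next
      case False
      then have "x \<notin> {g k<..<g (Suc k)}"
        using grid_disj[OF assms(1) assms(2), of k x] assms(3) \<open>k \<in> {..<N}\<close> by auto
      then show ?thesis using False by simp
    qed
  qed simp
  also have "\<dots> = fs j x" using assms(2) by simp
  finally show ?thesis .
qed

lemma pwf_out: assumes "\<not> (\<exists>j<N. x \<in> {g j<..<g (Suc j)})"
  shows "pwf N g fs x = 0"
  unfolding pwf_def using assms by (auto intro!: sum.neutral simp: indicator_def)

lemma pwf_cases:
  assumes "sgrid N g"
  obtains j where "j < N" "x \<in> {g j<..<g (Suc j)}" "\<And>fs. pwf N g fs x = fs j x"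
  | "\<And>fs. pwf N g fs x = 0" "\<not> (\<exists>j<N. x \<in> {g j<..<g (Suc j)})"
  using pwf_in[OF assms] pwf_out by blast

lemma pwf_ext:
  assumes "sgrid N g" "\<And>j x. j < N \<Longrightarrow> x \<in> {g j<..<g (Suc j)} \<Longrightarrow> fs j x = hs j x"
  shows "pwf N g fs = pwf N g hs"
proof
  fix x show "pwf N g fs x = pwf N g hs x"
    by (rule pwf_cases[OF assms(1), of x]) (auto simp: assms(2))
qed

lemma pwf_mult: assumes "sgrid N g"
  shows "(\<lambda>x. pwf N g fs x * pwf N g hs x) = pwf N g (\<lambda>j x. fs j x * hs j x)"
proof
  fix x show "pwf N g fs x * pwf N g hs x = pwf N g (\<lambda>j x. fs j x * hs j x) x"
    by (rule pwf_cases[OF assms(1), of x]) auto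
qed

lemma pwf_add: "(\<lambda>x. pwf N g fs x + pwf N g hs x) = pwf N g (\<lambda>j x. fs j x + hs j x)"
  unfolding pwf_def by (auto simp: sum.distrib algebra_simps)

lemma pwf_diff: "(\<lambda>x. pwf N g fs x - pwf N g hs x) = pwf N g (\<lambda>j x. fs j x - hs j x)"
  unfolding pwf_def by (auto simp: sum_subtractf algebra_simps)

lemma pwf_scale: "(\<lambda>x. c * pwf N g fs x) = pwf N g (\<lambda>j x. c * fs j x)"
  unfolding pwf_def by (rule ext) (simp only: sum_distrib_left mult.assoc)

lemma pwf_has_integral:
  assumes "sgrid N g" "\<And>j. j < N \<Longrightarrow> continuous_on {g j..g (Suc j)} (fs j)"
  shows "(pwf N g fs has_integral (\<Sum>j<N. integral {g j..g (Suc j)} (fs j))) UNIV"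
  unfolding pwf_def
proof (rule has_integral_sum)
  fix j assume j: "j \<in> {..<N}"
  have "(fs j has_integral integral {g j..g (Suc j)} (fs j)) {g j..g (Suc j)}"
    using assms(2) j integrable_continuous_real by (auto intro!: integrable_integral)
  then have "(fs j has_integral integral {g j..g (Suc j)} (fs j)) {g j<..<g (Suc j)}"
    by (simp add: has_integral_Icc_iff_Ioo)
  then have "((\<lambda>x. if x \<in> {g j<..<g (Suc j)} then fs j x else 0) has_integral integral {g j..g (Suc j)} (fs j)) UNIV"
    by (simp only: has_integral_restrict_UNIV)
  moreover have "(\<lambda>x. if x \<in> {g j<..<g (Suc j)} then fs j x else 0) = (\<lambda>x. fs j x * indicator {g j<..<g (Suc j)} x)"
    by (auto simp: indicator_def)
  ultimately show "((\<lambda>x. fs j x * indicator {g j<..<g (Suc j)} x) has_integral integral {g j..g (Suc j)} (fs j)) UNIV"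
    by simp
qed simp

interpretation fvs: vector_space "\<lambda>(c::real) (f::real\<Rightarrow>real) x. c * f x"
  by unfold_locales (auto simp: fun_eq_iff algebra_simps)

definition good :: "(real \<Rightarrow> real) set \<Rightarrow> (real \<Rightarrow> real) \<Rightarrow> bool" where
  "good S f \<longleftrightarrow> (\<forall>q\<in>S. (\<lambda>x. f x * q x) integrable_on UNIV)"

lemma good_lin: "good S f \<Longrightarrow> good S h \<Longrightarrow> good S (\<lambda>x. f x - c * h x)"
  unfolding good_def
proof safe
  fix q assume a: "\<forall>q\<in>S. (\<lambda>x. f x * q x) integrable_on UNIV" "\<forall>q\<in>S. (\<lambda>x. h x * q x) integrable_on UNIV" "q \<in> S"
  have "(\<lambda>x. f x * q x - c * (h x * q x)) integrable_on UNIV"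
    using a integrable_on_cmult_left[of "\<lambda>x. h x * q x" UNIV c] by (intro integrable_diff) auto
  then show "(\<lambda>x. (f x - c * h x) * q x) integrable_on UNIV"
    by (simp add: algebra_simps)
qed

lemma int_left: assumes "good S f" "good S h" "q \<in> S"
  shows "integral UNIV (\<lambda>x. (f x - c * h x) * q x) = integral UNIV (\<lambda>x. f x * q x) - c * integral UNIV (\<lambda>x. h x * q x)"
proof -
  have i: "(\<lambda>x. f x * q x) integrable_on UNIV" "(\<lambda>x. h x * q x) integrable_on UNIV"
    using assms unfolding good_def by auto
  have "integral UNIV (\<lambda>x. (f x - c * h x) * q x) = integral UNIV (\<lambda>x. f x * q x - c * (h x * q x))"
    by (simp add: algebra_simps)
  also have "\<dots> = integral UNIV (\<lambda>x. f x * q x) - integral UNIV (\<lambda>x. c * (h x * q x))"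
    using i integrable_on_cmult_left[of "\<lambda>x. h x * q x" UNIV c] by (intro integral_diff) auto
  also have "integral UNIV (\<lambda>x. c * (h x * q x)) = c * integral UNIV (\<lambda>x. h x * q x)"
    by simp
  finally show ?thesis .
qed

lemma int_right: assumes "good S f" "q1 \<in> S" "q2 \<in> S"
  shows "integral UNIV (\<lambda>x. f x * (q1 x + k * q2 x)) = integral UNIV (\<lambda>x. f x * q1 x) + k * integral UNIV (\<lambda>x. f x * q2 x)"
proof -
  have i: "(\<lambda>x. f x * q1 x) integrable_on UNIV" "(\<lambda>x. f x * q2 x) integrable_on UNIV"
    using assms unfolding good_def by auto
  have "integral UNIV (\<lambda>x. f x * (q1 x + k * q2 x)) = integral UNIV (\<lambda>x. f x * q1 x + k * (f x * q2 x))"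
    by (simp add: algebra_simps)
  also have "\<dots> = integral UNIV (\<lambda>x. f x * q1 x) + integral UNIV (\<lambda>x. k * (f x * q2 x))"
    using i integrable_on_cmult_left[of "\<lambda>x. f x * q2 x" UNIV k] by (intro integral_add) auto
  also have "integral UNIV (\<lambda>x. k * (f x * q2 x)) = k * integral UNIV (\<lambda>x. f x * q2 x)"
    by simp
  finally show ?thesis .
qed

lemma proj_exists:
  fixes S :: "(real \<Rightarrow> real) set"
  assumes sub: "fvs.subspace S"
    and gS: "\<forall>p\<in>S. good S p"
    and pd: "\<forall>p\<in>S. integral UNIV (\<lambda>x. p x * p x) = 0 \<longrightarrow> p = 0"
    and fin: "finite B" and BS: "B \<subseteq> S"
  shows "good S w \<Longrightarrow> \<exists>p\<in>fvs.span B. \<forall>q\<in>fvs.span B. integral UNIV (\<lambda>x. (w x - p x) * q x) = 0"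
  using fin BS
proof (induction B arbitrary: w rule: finite_induct)
  case empty
  then show ?case by (auto intro!: bexI[of _ 0] simp: fvs.span_empty fvs.span_zero)
next
  case (insert e B)
  have spB: "fvs.span B \<subseteq> S" using insert.prems sub by (intro fvs.span_minimal) auto
  have spB': "fvs.span (insert e B) \<subseteq> S" using insert.prems sub by (intro fvs.span_minimal) auto
  have eS: "e \<in> S" using insert.prems by auto
  obtain p' where p': "p' \<in> fvs.span B" "\<forall>q\<in>fvs.span B. integral UNIV (\<lambda>x. (w x - p' x) * q x) = 0"
    using insert.IH[of w] insert.prems by auto
  obtain q0 where q0: "q0 \<in> fvs.span B" "\<forall>q\<in>fvs.span B. integral UNIV (\<lambda>x. (e x - q0 x) * q x) = 0"
    using insert.IH[of e] insert.prems gS eS by auto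
  define e' where "e' = e - q0"
  have e'S: "e' \<in> S" unfolding e'_def using sub eS q0(1) spB by (intro fvs.subspace_diff) auto
  have q0sp: "q0 \<in> fvs.span (insert e B)" using q0(1) fvs.span_mono[of B "insert e B"] by auto
  have e'sp: "e' \<in> fvs.span (insert e B)" unfolding e'_def
    using q0sp fvs.span_base[of e "insert e B"] by (intro fvs.span_diff) auto
  have gw: "good S w" by fact
  have gp': "good S p'" using gS p'(1) spB by auto
  have ge': "good S e'" using gS e'S by auto
  have gwp': "good S (\<lambda>x. w x - 1 * p' x)" using good_lin[OF gw gp'] .
  show ?case
  proof (cases "integral UNIV (\<lambda>x. e' x * e' x) = 0")
    case True
    then have "e' = 0" using pd e'S by auto
    then have "e = q0" unfolding e'_def by simp
    then have "fvs.span (insert e B) = fvs.span B" using q0(1) fvs.span_redundant by simp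
    then show ?thesis using p' by auto
  next
    case False
    define c where "c = integral UNIV (\<lambda>x. (w x - p' x) * e' x) / integral UNIV (\<lambda>x. e' x * e' x)"
    define p where "p = p' + (\<lambda>x. c * e' x)"
    have ce: "(\<lambda>x. c * e' x) \<in> fvs.span (insert e B)" using fvs.span_scale[OF e'sp, of c] by simp
    have p'sp: "p' \<in> fvs.span (insert e B)" using p'(1) fvs.span_mono[of B "insert e B"] by auto
    have psp: "p \<in> fvs.span (insert e B)" unfolding p_def
      using fvs.span_add[OF p'sp ce] .
    have wp: "(\<lambda>x. w x - p x) = (\<lambda>x. (w x - 1 * p' x) - c * e' x)" unfolding p_def by auto
    have o1: "integral UNIV (\<lambda>x. (w x - p x) * r x) = 0" if r: "r \<in> fvs.span B" for r
    proof -
      have rS: "r \<in> S" using r spB by auto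
      have "integral UNIV (\<lambda>x. (w x - p x) * r x) = integral UNIV (\<lambda>x. ((w x - 1 * p' x) - c * e' x) * r x)"
        by (simp add: wp[unfolded fun_eq_iff] )
      also have "\<dots> = integral UNIV (\<lambda>x. (w x - 1 * p' x) * r x) - c * integral UNIV (\<lambda>x. e' x * r x)"
        using int_left[OF gwp' ge' rS] .
      also have "integral UNIV (\<lambda>x. e' x * r x) = 0" using q0(2) r unfolding e'_def by simp
      also have "integral UNIV (\<lambda>x. (w x - 1 * p' x) * r x) = 0" using p'(2) r by simp
      finally show ?thesis by simp
    qed
    have o2: "integral UNIV (\<lambda>x. (w x - p x) * e' x) = 0"
    proof -
      have "integral UNIV (\<lambda>x. (w x - p x) * e' x) = integral UNIV (\<lambda>x. ((w x - 1 * p' x) - c * e' x) * e' x)"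
        by (simp add: wp[unfolded fun_eq_iff] )
      also have "\<dots> = integral UNIV (\<lambda>x. (w x - 1 * p' x) * e' x) - c * integral UNIV (\<lambda>x. e' x * e' x)"
        using int_left[OF gwp' ge' e'S] .
      also have "\<dots> = 0" unfolding c_def using False by simp
      finally show ?thesis .
    qed
    have gwp: "good S (\<lambda>x. w x - p x)" using good_lin[OF gwp' ge', of c] wp by simp
    show ?thesis
    proof (intro bexI[OF _ psp] ballI)
      fix q assume q: "q \<in> fvs.span (insert e B)"
      then obtain k where k: "q - (\<lambda>x. k * e x) \<in> fvs.span B" using fvs.span_breakdown_eq by blast
      define r where "r = q - (\<lambda>x. k * e x) + (\<lambda>x. k * q0 x)"
      have kq: "(\<lambda>x. k * q0 x) \<in> fvs.span B" using fvs.span_scale[OF q0(1), of k] by simp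
      have r: "r \<in> fvs.span B" unfolding r_def using fvs.span_add[OF k kq] .
      have qe: "q = (\<lambda>x. r x + k * e' x)" unfolding r_def e'_def by (auto simp: algebra_simps)
      have "integral UNIV (\<lambda>x. (w x - p x) * q x) = integral UNIV (\<lambda>x. (w x - p x) * (r x + k * e' x))"
        by (subst qe) simp
      also have "\<dots> = integral UNIV (\<lambda>x. (w x - p x) * r x) + k * integral UNIV (\<lambda>x. (w x - p x) * e' x)"
        using int_right[OF gwp _ e'S] r spB by auto
      also have "\<dots> = 0" using o1[OF r] o2 by simp
      finally show "integral UNIV (\<lambda>x. (w x - p x) * q x) = 0" .
    qed
  qed
qed




lemma fsum_apply: "(\<Sum>a\<in>A. F a) x = (\<Sum>a\<in>A. F a (x::real)::real)"
  by (induction A rule: infinite_finite_induct) (auto simp: zero_fun_def)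

lemma C1_cont: "f C1_differentiable_on UNIV \<Longrightarrow> continuous_on S f"
  using C1_diff_imp_diff differentiable_imp_continuous_on continuous_on_subset by blast

lemma C1_deriv:
  fixes f :: "real \<Rightarrow> real"
  assumes "f C1_differentiable_on UNIV"
  shows "(f has_real_derivative deriv f x) (at x)" "continuous_on S (deriv f)"
proof -
  obtain D where D: "\<And>x. (f has_vector_derivative D x) (at x)" "continuous_on UNIV D"
    using assms unfolding C1_differentiable_on_def by auto
  have d: "\<And>x. (f has_real_derivative D x) (at x)"
    using D(1) has_real_derivative_iff_has_vector_derivative by blast
  then have "deriv f = D" using DERIV_imp_deriv by blast
  then show "(f has_real_derivative deriv f x) (at x)" "continuous_on S (deriv f)"
    using d D(2) continuous_on_subset[of UNIV "deriv f" S] by auto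
qed

lemma Ufun_iff: "w \<in> Ufun L N g \<longleftrightarrow> (\<exists>vs. (\<forall>j<N. vs j \<in> Vspan L \<and> vs j C1_differentiable_on UNIV) \<and> w = pwf N g vs)"
  by (simp add: Ufun_def pwf_def)

lemma Vspan_zero: "(\<lambda>x. 0) \<in> Vspan L"
  unfolding Vspan_def by (auto intro!: exI[of _ "\<lambda>h. 0"])

lemma Vspan_add: "f \<in> Vspan L \<Longrightarrow> h \<in> Vspan L \<Longrightarrow> (\<lambda>x. f x + h x) \<in> Vspan L"
  unfolding Vspan_def
proof safe
  fix c1 c2
  show "\<exists>c. (\<lambda>x. (\<Sum>h\<in>L. c1 h * h x) + (\<Sum>h\<in>L. c2 h * h x)) = (\<lambda>x. \<Sum>h\<in>L. c h * h x)"
    by (rule exI[of _ "\<lambda>h. c1 h + c2 h"]) (simp add: sum.distrib distrib_right)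
qed

lemma Vspan_scale: "f \<in> Vspan L \<Longrightarrow> (\<lambda>x. a * f x) \<in> Vspan L"
  unfolding Vspan_def
proof safe
  fix c1
  show "\<exists>c. (\<lambda>x. a * (\<Sum>h\<in>L. c1 h * h x)) = (\<lambda>x. \<Sum>h\<in>L. c h * h x)"
    by (rule exI[of _ "\<lambda>h. a * c1 h"]) (simp add: sum_distrib_left mult.assoc)
qed

lemma Ufun_subspace: "fvs.subspace (Ufun L N g)"
proof (rule fvs.subspaceI)
  have "0 = pwf N g (\<lambda>j x. 0)" unfolding pwf_def zero_fun_def by simp
  then show "0 \<in> Ufun L N g" unfolding Ufun_iff using Vspan_zero by (auto intro!: exI[of _ "\<lambda>j x. 0"])
next
  fix x y assume "x \<in> Ufun L N g" "y \<in> Ufun L N g"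
  then obtain vs ws where vs: "\<forall>j<N. vs j \<in> Vspan L \<and> vs j C1_differentiable_on UNIV" "x = pwf N g vs"
    and ws: "\<forall>j<N. ws j \<in> Vspan L \<and> ws j C1_differentiable_on UNIV" "y = pwf N g ws"
    unfolding Ufun_iff by blast
  have "x + y = pwf N g (\<lambda>j x. vs j x + ws j x)" using pwf_add[of N g vs ws] vs ws
    by (simp add: plus_fun_def)
  then show "x + y \<in> Ufun L N g" unfolding Ufun_iff using vs ws
    by (intro exI[of _ "\<lambda>j x. vs j x + ws j x"]) (auto intro: Vspan_add)
next
  fix c x assume "x \<in> Ufun L N g"
  then obtain vs where vs: "\<forall>j<N. vs j \<in> Vspan L \<and> vs j C1_differentiable_on UNIV" "x = pwf N g vs"
    unfolding Ufun_iff by blast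
  have "(\<lambda>y. c * x y) = pwf N g (\<lambda>j x. c * vs j x)" using pwf_scale[of c N g vs] vs by simp
  then show "(\<lambda>y. c * x y) \<in> Ufun L N g" unfolding Ufun_iff using vs
    by (intro exI[of _ "\<lambda>j x. c * vs j x"]) (auto intro: Vspan_scale)
qed

lemma Ufun_fin_span:
  assumes "finite L"
  shows "\<exists>E. finite E \<and> Ufun L N g \<subseteq> fvs.span E"
proof (intro exI conjI subsetI)
  define E where "E = (\<lambda>(h,j). \<lambda>x. h x * indicator {g j<..<g (Suc j)} x) ` (L \<times> {..<N})"
  show "finite E" unfolding E_def using assms by auto
  fix w assume "w \<in> Ufun L N g"
  then obtain vs where vs: "\<forall>j<N. vs j \<in> Vspan L" "w = pwf N g vs"
    unfolding Ufun_iff by blast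
  have "\<forall>j\<in>{..<N}. \<exists>c. vs j = (\<lambda>x. \<Sum>h\<in>L. c h * h x)" using vs(1) unfolding Vspan_def by auto
  then obtain C where C: "\<forall>j\<in>{..<N}. vs j = (\<lambda>x. \<Sum>h\<in>L. C j h * h x)" by (metis bchoice)
  have "w = (\<Sum>j<N. \<Sum>h\<in>L. (\<lambda>x. C j h * (h x * indicator {g j<..<g (Suc j)} x)))"
  proof
    fix x
    have "w x = (\<Sum>j<N. (\<Sum>h\<in>L. C j h * h x) * indicator {g j<..<g (Suc j)} x)"
      unfolding vs(2) pwf_def using C by (intro sum.cong) auto
    also have "\<dots> = (\<Sum>j<N. \<Sum>h\<in>L. C j h * (h x * indicator {g j<..<g (Suc j)} x))"
      by (simp add: sum_distrib_right mult.assoc)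
    finally show "w x = (\<Sum>j<N. \<Sum>h\<in>L. (\<lambda>x. C j h * (h x * indicator {g j<..<g (Suc j)} x))) x"
      by (simp add: fsum_apply)
  qed
  also have "\<dots> \<in> fvs.span E"
  proof (intro fvs.span_sum)
    fix j h assume "j \<in> {..<N}" "h \<in> L"
    then have "(\<lambda>x. h x * indicator {g j<..<g (Suc j)} x) \<in> E" unfolding E_def by force
    from fvs.span_scale[OF fvs.span_base[OF this], of "C j h"]
    show "(\<lambda>x. C j h * (h x * indicator {g j<..<g (Suc j)} x)) \<in> fvs.span E" by simp
  qed
  finally show "w \<in> fvs.span E" .
qed

lemma Ufun_cont: "w \<in> Ufun L N g \<Longrightarrow> \<exists>vs. (\<forall>j<N. vs j \<in> Vspan L \<and> vs j C1_differentiable_on UNIV \<and> continuous_on UNIV (vs j)) \<and> w = pwf N g vs"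
  unfolding Ufun_iff using C1_cont by blast

lemma pwf_good:
  assumes "sgrid N g" "\<forall>j<N. continuous_on UNIV (fs j)"
  shows "good (Ufun L N g) (pwf N g fs)"
  unfolding good_def
proof
  fix q assume "q \<in> Ufun L N g"
  then obtain vs where vs: "\<forall>j<N. continuous_on UNIV (vs j)" "q = pwf N g vs" using Ufun_cont by blast
  have "(pwf N g (\<lambda>j x. fs j x * vs j x) has_integral (\<Sum>j<N. integral {g j..g (Suc j)} (\<lambda>x. fs j x * vs j x))) UNIV"
    using assms vs by (intro pwf_has_integral) (auto intro!: continuous_intros intro: continuous_on_subset)
  then have "pwf N g (\<lambda>j x. fs j x * vs j x) integrable_on UNIV" by blast
  then show "(\<lambda>x. pwf N g fs x * q x) integrable_on UNIV" using pwf_mult[OF assms(1)] vs by simp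
qed

lemma Ufun_good: "sgrid N g \<Longrightarrow> q \<in> Ufun L N g \<Longrightarrow> good (Ufun L N g) q"
  using Ufun_cont pwf_good by blast

lemma Ufun_pd:
  assumes g: "sgrid N g" and p: "p \<in> Ufun L N g" and z: "integral UNIV (\<lambda>x. p x * p x) = 0"
  shows "p = 0"
proof -
  obtain vs where vs: "\<forall>j<N. continuous_on UNIV (vs j)" "p = pwf N g vs" using Ufun_cont p by blast
  let ?f = "\<lambda>j x. vs j x * vs j x"
  have c: "continuous_on S (?f j)" if "j < N" for j S
    using vs(1) that by (auto intro!: continuous_intros intro: continuous_on_subset)
  have hi: "(pwf N g ?f has_integral (\<Sum>j<N. integral {g j..g (Suc j)} (?f j))) UNIV"
    using g c by (intro pwf_has_integral) auto
  have pp: "(\<lambda>x. p x * p x) = pwf N g ?f" using pwf_mult[OF g] vs by simp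
  have s0: "(\<Sum>j<N. integral {g j..g (Suc j)} (?f j)) = 0"
  proof -
    have "integral UNIV (\<lambda>x. p x * p x) = (\<Sum>j<N. integral {g j..g (Suc j)} (?f j))"
      unfolding pp using hi by (rule integral_unique)
    then show ?thesis using z by simp
  qed
  have nn: "0 \<le> integral {g j..g (Suc j)} (?f j)" if "j < N" for j
    using c[OF that] by (intro integral_nonneg integrable_continuous_real) auto
  have z0: "integral {g j..g (Suc j)} (?f j) = 0" if "j < N" for j
    using s0 nn sum_nonneg_eq_0_iff[of "{..<N}" "\<lambda>j. integral {g j..g (Suc j)} (?f j)"] that by auto
  show "p = 0"
  proof
    fix x
    show "p x = 0 x"
    proof (rule pwf_cases[OF g, of x])
      fix j assume j: "j < N" "x \<in> {g j<..<g (Suc j)}" "\<And>fs. pwf N g fs x = fs j x"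
      have lt: "g j < g (Suc j)" using g j unfolding sgrid_def by auto
      have "(?f j has_integral 0) (cbox (g j) (g (Suc j)))"
        using z0[OF j(1)] c[OF j(1)] integrable_continuous_real[of "g j" "g (Suc j)" "?f j"]
        by (metis cbox_interval has_integral_integral)
      moreover have cc: "continuous_on (cbox (g j) (g (Suc j))) (?f j)" using c[OF j(1)] .
      moreover have ne: "box (g j) (g (Suc j)) \<noteq> {}" using lt by (simp add: box_real)
      moreover have xin: "x \<in> cbox (g j) (g (Suc j))" using j(2) by (auto simp: cbox_interval)
      ultimately have "?f j x = 0"
        using has_integral_0_cbox_imp_0[of "g j" "g (Suc j)" "?f j" x] by simp
      then show ?thesis using j vs by simp
    qed (use vs in simp)
  qed
qed




lemma pw_deriv_pwf:
  assumes g: "sgrid N g" and C1: "\<forall>j<N. uu j C1_differentiable_on UNIV"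
  shows "pw_deriv N g (pwf N g uu) = pwf N g (\<lambda>j. deriv (uu j))"
proof
  fix x
  show "pw_deriv N g (pwf N g uu) x = pwf N g (\<lambda>j. deriv (uu j)) x"
  proof (rule pwf_cases[OF g, of x])
    fix j assume j: "j < N" "x \<in> {g j<..<g (Suc j)}" "\<And>fs. pwf N g fs x = fs j x"
    have d: "(uu j has_real_derivative deriv (uu j) x) (at x)" using C1_deriv(1) C1 j(1) by blast
    have "(pwf N g uu has_real_derivative deriv (uu j) x) (at x)"
      using j(2) pwf_in[OF g j(1)]
      by (intro has_field_derivative_transform_within_open[OF d, of "{g j<..<g (Suc j)}"]) auto
    then have "deriv (pwf N g uu) x = deriv (uu j) x" by (rule DERIV_imp_deriv)
    then show ?thesis unfolding pw_deriv_def using j by auto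
  next
    assume "\<And>fs. pwf N g fs x = 0" "\<not> (\<exists>j<N. x \<in> {g j<..<g (Suc j)})"
    then show ?thesis unfolding pw_deriv_def by auto
  qed
qed

lemma D2_prop:
  assumes g: "sgrid N g" and L: "finite L" and u: "u \<in> Ufun L N g"
  shows "D2 L N g u \<in> Ufun L N g \<and>
    (\<forall>q\<in>Ufun L N g. integral UNIV (\<lambda>x. (pw_deriv N g u x - D2 L N g u x) * q x) = 0)"
proof -
  let ?S = "Ufun L N g"
  let ?w = "pw_deriv N g u"
  obtain E where E: "finite E" "?S \<subseteq> fvs.span E" using Ufun_fin_span[OF L] by blast
  obtain B where B: "B \<subseteq> ?S" "fvs.independent B" "?S \<subseteq> fvs.span B"
    using fvs.maximal_independent_subset[of ?S] by blast
  have finB: "finite B" using fvs.independent_span_bound[OF E(1) B(2)] B(1) E(2) by blast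
  have spB: "fvs.span B = ?S" using B(1,3) Ufun_subspace fvs.span_minimal[of B ?S] by auto
  obtain uu where uu: "\<forall>j<N. uu j C1_differentiable_on UNIV" "u = pwf N g uu" using u Ufun_iff by blast
  have w: "?w = pwf N g (\<lambda>j. deriv (uu j))" using pw_deriv_pwf[OF g uu(1)] uu(2) by simp
  have gw: "good ?S ?w" unfolding w using g uu(1) C1_deriv(2) by (intro pwf_good) auto
  have gS: "\<forall>p\<in>?S. good ?S p" using Ufun_good[OF g] by blast
  have pd: "\<forall>p\<in>?S. integral UNIV (\<lambda>x. p x * p x) = 0 \<longrightarrow> p = 0" using Ufun_pd[OF g] by blast
  obtain p where p: "p \<in> ?S" "\<forall>q\<in>?S. integral UNIV (\<lambda>x. (?w x - p x) * q x) = 0"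
    using proj_exists[OF Ufun_subspace gS pd finB B(1) gw] spB by auto
  have uniq: "p2 = p" if p2: "p2 \<in> ?S" "\<forall>q\<in>?S. integral UNIV (\<lambda>x. (?w x - p2 x) * q x) = 0" for p2
  proof -
    have d: "(p - p2) \<in> ?S" using p(1) p2(1) Ufun_subspace by (intro fvs.subspace_diff) auto
    have g1: "good ?S (\<lambda>x. ?w x - 1 * p2 x)" using good_lin[OF gw gS[rule_format, OF p2(1)]] .
    have g2: "good ?S (\<lambda>x. ?w x - 1 * p x)" using good_lin[OF gw gS[rule_format, OF p(1)]] .
    have a1: "integral UNIV (\<lambda>x. (?w x - p2 x) * (p - p2) x) = 0" using p2(2) d by blast
    have a2: "integral UNIV (\<lambda>x. (?w x - p x) * (p - p2) x) = 0" using p(2) d by blast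
    have "integral UNIV (\<lambda>x. ((?w x - 1 * p2 x) - 1 * (?w x - 1 * p x)) * (p - p2) x)
       = integral UNIV (\<lambda>x. (?w x - 1 * p2 x) * (p - p2) x) - 1 * integral UNIV (\<lambda>x. (?w x - 1 * p x) * (p - p2) x)"
      using int_left[OF g1 g2 d] .
    also have "\<dots> = 0" using a1 a2 by simp
    finally have "integral UNIV (\<lambda>x. (p - p2) x * (p - p2) x) = 0" by simp
    then have "p - p2 = 0" using pd d by blast
    then show ?thesis by simp
  qed
  have ex1: "\<exists>!p. p \<in> ?S \<and> (\<forall>q\<in>?S. integral UNIV (\<lambda>x. (?w x - p x) * q x) = 0)"
    using p uniq by blast
  show ?thesis unfolding D2_def L2proj_def using theI'[OF ex1] .
qed

lemma int_restr:
  assumes g: "sgrid N g" and m: "m \<le> N" and c: "\<forall>j<N. continuous_on UNIV (fs j)"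
  shows "integral UNIV (pwf N g (\<lambda>j x. if n \<le> j \<and> j < m then fs j x else 0))
       = (\<Sum>j\<in>{n..<m}. integral {g j..g (Suc j)} (fs j))"
proof -
  let ?h = "\<lambda>j x. if n \<le> j \<and> j < m then fs j x else 0"
  have cc: "continuous_on {g j..g (Suc j)} (?h j)" if "j < N" for j
    using c that by (cases "n \<le> j \<and> j < m") (auto intro: continuous_on_subset)
  have "integral UNIV (pwf N g ?h) = (\<Sum>j<N. integral {g j..g (Suc j)} (?h j))"
    using pwf_has_integral[OF g cc] by (rule integral_unique)
  also have "\<dots> = (\<Sum>j<N. if n \<le> j \<and> j < m then integral {g j..g (Suc j)} (fs j) else 0)"
    by (intro sum.cong) auto
  also have "\<dots> = (\<Sum>j\<in>{j\<in>{..<N}. n \<le> j \<and> j < m}. integral {g j..g (Suc j)} (fs j))"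
    by (rule sum.inter_filter[symmetric]) simp
  also have "{j\<in>{..<N}. n \<le> j \<and> j < m} = {n..<m}" using m by auto
  finally show ?thesis .
qed

lemma pwf_restrict:
  assumes g: "sgrid N g" and m: "m \<le> N" and nm: "n \<le> m"
  shows "(\<lambda>x. if x \<in> {g n..g m} then pwf N g fs x else 0) = pwf N g (\<lambda>j x. if n \<le> j \<and> j < m then fs j x else 0)"
proof
  fix x
  show "(if x \<in> {g n..g m} then pwf N g fs x else 0) = pwf N g (\<lambda>j x. if n \<le> j \<and> j < m then fs j x else 0) x"
  proof (rule pwf_cases[OF g, of x])
    fix j assume j: "j < N" "x \<in> {g j<..<g (Suc j)}" "\<And>fs. pwf N g fs x = fs j x"
    have "x \<in> {g n..g m} \<longleftrightarrow> n \<le> j \<and> j < m"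
    proof
      assume x: "x \<in> {g n..g m}"
      show "n \<le> j \<and> j < m"
      proof (rule ccontr)
        assume "\<not> (n \<le> j \<and> j < m)"
        then consider "j < n" | "m \<le> j" by linarith
        then show False
        proof cases
          case 1 then have "g (Suc j) \<le> g n" using grid_le[OF g, of "Suc j" n] j(1) m nm by auto
          then show False using x j(2) by auto
        next
          case 2 then have "g m \<le> g j" using grid_le[OF g, of m j] j(1) by auto
          then show False using x j(2) by auto
        qed
      qed
    next
      assume a: "n \<le> j \<and> j < m"
      then have "g n \<le> g j" "g (Suc j) \<le> g m" using grid_le[OF g] j(1) m by auto
      then show "x \<in> {g n..g m}" using j(2) by auto
    qed
    then show ?thesis using j(3) by simp
  qed simp
qed


lemma ftc_piece:
  fixes f h :: "real \<Rightarrow> real"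
  assumes ab: "a \<le> b" and f: "f C1_differentiable_on UNIV" and h: "h C1_differentiable_on UNIV"
  shows "integral {a..b} (\<lambda>x. deriv f x * h x) + integral {a..b} (\<lambda>x. deriv h x * f x) = f b * h b - f a * h a"
proof -
  have der: "((\<lambda>x. f x * h x) has_real_derivative (deriv f x * h x + deriv h x * f x)) (at x)" for x
    by (rule DERIV_mult[OF C1_deriv(1)[OF f, of x] C1_deriv(1)[OF h, of x]])
  have vd: "((\<lambda>x. f x * h x) has_vector_derivative (deriv f x * h x + deriv h x * f x)) (at x within {a..b})" for x
    using der[of x] unfolding has_real_derivative_iff_has_vector_derivative by (rule has_vector_derivative_at_within)
  have hi: "((\<lambda>x. deriv f x * h x + deriv h x * f x) has_integral (f b * h b - f a * h a)) {a..b}"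
    by (rule fundamental_theorem_of_calculus[OF ab vd])
  have c1: "continuous_on {a..b} (\<lambda>x. deriv f x * h x)"
    by (intro continuous_on_mult C1_deriv(2)[OF f] C1_cont[OF h])
  have c2: "continuous_on {a..b} (\<lambda>x. deriv h x * f x)"
    by (intro continuous_on_mult C1_deriv(2)[OF h] C1_cont[OF f])
  have i1: "(\<lambda>x. deriv f x * h x) integrable_on {a..b}" using c1 by (rule integrable_continuous_real)
  have i2: "(\<lambda>x. deriv h x * f x) integrable_on {a..b}" using c2 by (rule integrable_continuous_real)
  have "integral {a..b} (\<lambda>x. deriv f x * h x + deriv h x * f x) = integral {a..b} (\<lambda>x. deriv f x * h x) + integral {a..b} (\<lambda>x. deriv h x * f x)"
    by (rule integral_add[OF i1 i2])
  moreover have "integral {a..b} (\<lambda>x. deriv f x * h x + deriv h x * f x) = f b * h b - f a * h a"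
    using hi by (rule integral_unique)
  ultimately show ?thesis by simp
qed

lemma lim_left:
  assumes g: "sgrid N g" and j: "j < N" and c: "continuous_on UNIV (uu j)"
  shows "Lim (at_left (g (Suc j))) (pwf N g uu) = uu j (g (Suc j))"
proof -
  let ?b = "g (Suc j)"
  have "isCont (uu j) ?b" using c continuous_on_eq_continuous_at by blast
  then have "(uu j \<longlongrightarrow> uu j ?b) (at ?b)" by (simp add: isCont_def)
  then have t: "(uu j \<longlongrightarrow> uu j ?b) (at_left ?b)" by (rule tendsto_mono[OF at_le[OF subset_UNIV]])
  have lt: "g j < ?b" using g j unfolding sgrid_def by auto
  have "eventually (\<lambda>x. uu j x = pwf N g uu x) (at_left ?b)"
    using eventually_at_left_real[OF lt] by eventually_elim (use pwf_in[OF g j] in auto)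
  then have "(pwf N g uu \<longlongrightarrow> uu j ?b) (at_left ?b)" using t tendsto_cong by blast
  then show ?thesis by (rule tendsto_Lim[OF trivial_limit_at_left_real])
qed

lemma lim_right:
  assumes g: "sgrid N g" and j: "j < N" and c: "continuous_on UNIV (uu j)"
  shows "Lim (at_right (g j)) (pwf N g uu) = uu j (g j)"
proof -
  let ?b = "g j"
  have "isCont (uu j) ?b" using c continuous_on_eq_continuous_at by blast
  then have "(uu j \<longlongrightarrow> uu j ?b) (at ?b)" by (simp add: isCont_def)
  then have t: "(uu j \<longlongrightarrow> uu j ?b) (at_right ?b)" by (rule tendsto_mono[OF at_le[OF subset_UNIV]])
  have lt: "g j < g (Suc j)" using g j unfolding sgrid_def by auto
  have "eventually (\<lambda>x. uu j x = pwf N g uu x) (at_right ?b)"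
    using eventually_at_right_real[OF lt] by eventually_elim (use pwf_in[OF g j] in auto)
  then have "(pwf N g uu \<longlongrightarrow> uu j ?b) (at_right ?b)" using t tendsto_cong by blast
  then show ?thesis by (rule tendsto_Lim[OF trivial_limit_at_right_real])
qed




lemma restr_Ufun:
  assumes "\<forall>j<N. vv j \<in> Vspan L \<and> vv j C1_differentiable_on UNIV \<and> continuous_on UNIV (vv j)"
  shows "pwf N g (\<lambda>j x. if n \<le> j \<and> j < m then vv j x else 0) \<in> Ufun L N g"
  unfolding Ufun_iff
proof (intro exI conjI allI impI)
  fix j assume j: "j < N"
  show "(\<lambda>x. if n \<le> j \<and> j < m then vv j x else 0) \<in> Vspan L"
    using assms j by (cases "n \<le> j \<and> j < m") (auto simp: Vspan_zero)
  show "(\<lambda>x. if n \<le> j \<and> j < m then vv j x else 0) C1_differentiable_on UNIV"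
    using assms j by (cases "n \<le> j \<and> j < m") auto
qed simp

lemma level:
  assumes g: "sgrid N g" and L: "finite L" and u: "u \<in> Ufun L N g" and v: "v \<in> Ufun L N g"
    and nm: "n < m" and mN: "m \<le> N"
  shows "integral {g n..g m} (\<lambda>x. D2 L N g u x * v x)
   = - integral {g n..g m} (\<lambda>x. u x * D2 L N g v x)
     + (\<Sum>i\<in>{n..<m}.
          Lim (at_left (g (Suc i))) u * Lim (at_left (g (Suc i))) v
        - Lim (at_right (g i)) u * Lim (at_right (g i)) v)"
proof -
  obtain uu where uu: "\<forall>j<N. uu j \<in> Vspan L \<and> uu j C1_differentiable_on UNIV \<and> continuous_on UNIV (uu j)" "u = pwf N g uu"
    using Ufun_cont[OF u] by blast
  obtain vv where vv: "\<forall>j<N. vv j \<in> Vspan L \<and> vv j C1_differentiable_on UNIV \<and> continuous_on UNIV (vv j)" "v = pwf N g vv"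
    using Ufun_cont[OF v] by blast
  define P where "P = D2 L N g u"
  define Q where "Q = D2 L N g v"
  have Pp: "P \<in> Ufun L N g" "\<forall>q\<in>Ufun L N g. integral UNIV (\<lambda>x. (pw_deriv N g u x - P x) * q x) = 0"
    using D2_prop[OF g L u] unfolding P_def by auto
  have Qp: "Q \<in> Ufun L N g" "\<forall>q\<in>Ufun L N g. integral UNIV (\<lambda>x. (pw_deriv N g v x - Q x) * q x) = 0"
    using D2_prop[OF g L v] unfolding Q_def by auto
  obtain pp where pp: "\<forall>j<N. continuous_on UNIV (pp j)" "P = pwf N g pp"
    using Ufun_cont[OF Pp(1)] by blast
  obtain qq where qq: "\<forall>j<N. continuous_on UNIV (qq j)" "Q = pwf N g qq"
    using Ufun_cont[OF Qp(1)] by blast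
  have du: "pw_deriv N g u = pwf N g (\<lambda>j. deriv (uu j))" using pw_deriv_pwf[OF g] uu by auto
  have dv: "pw_deriv N g v = pwf N g (\<lambda>j. deriv (vv j))" using pw_deriv_pwf[OF g] vv by auto
  have cdu: "continuous_on UNIV (deriv (uu j))" if "j < N" for j using C1_deriv(2) uu that by blast
  have cdv: "continuous_on UNIV (deriv (vv j))" if "j < N" for j using C1_deriv(2) vv that by blast
  define vc where "vc = pwf N g (\<lambda>j x. if n \<le> j \<and> j < m then vv j x else 0)"
  define uc where "uc = pwf N g (\<lambda>j x. if n \<le> j \<and> j < m then uu j x else 0)"
  have vcU: "vc \<in> Ufun L N g" unfolding vc_def using restr_Ufun[OF vv(1)] .
  have ucU: "uc \<in> Ufun L N g" unfolding uc_def using restr_Ufun[OF uu(1)] .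
  let ?I = "\<lambda>j f. integral {g j..g (Suc j)} f"
  have int_ok: "?I j (\<lambda>x. (a x - b x) * c x) = ?I j (\<lambda>x. a x * c x) - ?I j (\<lambda>x. b x * c x)"
    if "continuous_on UNIV a" "continuous_on UNIV b" "continuous_on UNIV c" for j and a b c :: "real \<Rightarrow> real"
  proof -
    have i1: "(\<lambda>x. a x * c x) integrable_on {g j..g (Suc j)}"
      using continuous_on_subset[OF continuous_on_mult'[OF that(1) that(3)] subset_UNIV] by (rule integrable_continuous_real)
    have i2: "(\<lambda>x. b x * c x) integrable_on {g j..g (Suc j)}"
      using continuous_on_subset[OF continuous_on_mult'[OF that(2) that(3)] subset_UNIV] by (rule integrable_continuous_real)
    have "?I j (\<lambda>x. (a x - b x) * c x) = ?I j (\<lambda>x. a x * c x - b x * c x)" by (simp add: algebra_simps)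
    also have "\<dots> = ?I j (\<lambda>x. a x * c x) - ?I j (\<lambda>x. b x * c x)" by (rule integral_diff[OF i1 i2])
    finally show ?thesis .
  qed
  have e1: "(\<lambda>x. (pw_deriv N g u x - P x) * vc x)
     = pwf N g (\<lambda>j x. if n \<le> j \<and> j < m then (deriv (uu j) x - pp j x) * vv j x else 0)"
  proof
    fix x show "(pw_deriv N g u x - P x) * vc x = pwf N g (\<lambda>j x. if n \<le> j \<and> j < m then (deriv (uu j) x - pp j x) * vv j x else 0) x"
      unfolding du pp(2) vc_def by (rule pwf_cases[OF g, of x]) auto
  qed
  have s1: "(\<Sum>j\<in>{n..<m}. ?I j (\<lambda>x. (deriv (uu j) x - pp j x) * vv j x)) = 0"
  proof -
    have "0 = integral UNIV (\<lambda>x. (pw_deriv N g u x - P x) * vc x)" using Pp(2) vcU by simp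
    also have "\<dots> = (\<Sum>j\<in>{n..<m}. ?I j (\<lambda>x. (deriv (uu j) x - pp j x) * vv j x))"
      unfolding e1 using g mN cdu pp(1) vv(1)
      by (intro int_restr) (auto intro!: continuous_intros)
    finally show ?thesis by simp
  qed
  have A: "(\<Sum>j\<in>{n..<m}. ?I j (\<lambda>x. pp j x * vv j x)) = (\<Sum>j\<in>{n..<m}. ?I j (\<lambda>x. deriv (uu j) x * vv j x))"
  proof -
    have "(\<Sum>j\<in>{n..<m}. ?I j (\<lambda>x. (deriv (uu j) x - pp j x) * vv j x))
       = (\<Sum>j\<in>{n..<m}. ?I j (\<lambda>x. deriv (uu j) x * vv j x) - ?I j (\<lambda>x. pp j x * vv j x))"
      using mN cdu pp(1) vv(1) by (intro sum.cong refl int_ok) auto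
    then show ?thesis using s1 by (simp add: sum_subtractf)
  qed
  have e2: "(\<lambda>x. (pw_deriv N g v x - Q x) * uc x)
     = pwf N g (\<lambda>j x. if n \<le> j \<and> j < m then (deriv (vv j) x - qq j x) * uu j x else 0)"
  proof
    fix x show "(pw_deriv N g v x - Q x) * uc x = pwf N g (\<lambda>j x. if n \<le> j \<and> j < m then (deriv (vv j) x - qq j x) * uu j x else 0) x"
      unfolding dv qq(2) uc_def by (rule pwf_cases[OF g, of x]) auto
  qed
  have s2: "(\<Sum>j\<in>{n..<m}. ?I j (\<lambda>x. (deriv (vv j) x - qq j x) * uu j x)) = 0"
  proof -
    have "0 = integral UNIV (\<lambda>x. (pw_deriv N g v x - Q x) * uc x)" using Qp(2) ucU by simp
    also have "\<dots> = (\<Sum>j\<in>{n..<m}. ?I j (\<lambda>x. (deriv (vv j) x - qq j x) * uu j x))"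
      unfolding e2 using g mN cdv qq(1) uu(1)
      by (intro int_restr) (auto intro!: continuous_intros)
    finally show ?thesis by simp
  qed
  have B: "(\<Sum>j\<in>{n..<m}. ?I j (\<lambda>x. qq j x * uu j x)) = (\<Sum>j\<in>{n..<m}. ?I j (\<lambda>x. deriv (vv j) x * uu j x))"
  proof -
    have "(\<Sum>j\<in>{n..<m}. ?I j (\<lambda>x. (deriv (vv j) x - qq j x) * uu j x))
       = (\<Sum>j\<in>{n..<m}. ?I j (\<lambda>x. deriv (vv j) x * uu j x) - ?I j (\<lambda>x. qq j x * uu j x))"
      using mN cdv qq(1) uu(1) by (intro sum.cong refl int_ok) auto
    then show ?thesis using s2 by (simp add: sum_subtractf)
  qed
  have lhs: "integral {g n..g m} (\<lambda>x. P x * v x) = (\<Sum>j\<in>{n..<m}. ?I j (\<lambda>x. pp j x * vv j x))"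
  proof -
    have pm: "(\<lambda>x. P x * v x) = pwf N g (\<lambda>j x. pp j x * vv j x)"
      unfolding pp(2) vv(2) by (rule pwf_mult[OF g])
    have r: "(\<lambda>x. if x \<in> {g n..g m} then P x * v x else 0) = pwf N g (\<lambda>j x. if n \<le> j \<and> j < m then pp j x * vv j x else 0)"
    proof -
      have "(\<lambda>x. if x \<in> {g n..g m} then P x * v x else 0) = (\<lambda>x. if x \<in> {g n..g m} then pwf N g (\<lambda>j x. pp j x * vv j x) x else 0)"
        unfolding pm[symmetric] by simp
      also have "\<dots> = pwf N g (\<lambda>j x. if n \<le> j \<and> j < m then pp j x * vv j x else 0)"
        using nm by (intro pwf_restrict[OF g mN]) simp
      finally show ?thesis .
    qed
    have "integral {g n..g m} (\<lambda>x. P x * v x) = integral UNIV (\<lambda>x. if x \<in> {g n..g m} then P x * v x else 0)"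
      by (rule integral_restrict_UNIV[symmetric])
    also have "\<dots> = integral UNIV (pwf N g (\<lambda>j x. if n \<le> j \<and> j < m then pp j x * vv j x else 0))"
      by (simp only: r)
    also have "\<dots> = (\<Sum>j\<in>{n..<m}. ?I j (\<lambda>x. pp j x * vv j x))"
      using g mN pp(1) vv(1) by (intro int_restr) (auto intro!: continuous_intros)
    finally show ?thesis .
  qed
  have rhs: "integral {g n..g m} (\<lambda>x. u x * Q x) = (\<Sum>j\<in>{n..<m}. ?I j (\<lambda>x. qq j x * uu j x))"
  proof -
    have pm: "(\<lambda>x. u x * Q x) = pwf N g (\<lambda>j x. qq j x * uu j x)"
    proof
      fix x show "u x * Q x = pwf N g (\<lambda>j x. qq j x * uu j x) x"
        unfolding uu(2) qq(2) by (rule pwf_cases[OF g, of x]) (auto simp: mult.commute)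
    qed
    have r: "(\<lambda>x. if x \<in> {g n..g m} then u x * Q x else 0) = pwf N g (\<lambda>j x. if n \<le> j \<and> j < m then qq j x * uu j x else 0)"
    proof -
      have "(\<lambda>x. if x \<in> {g n..g m} then u x * Q x else 0) = (\<lambda>x. if x \<in> {g n..g m} then pwf N g (\<lambda>j x. qq j x * uu j x) x else 0)"
        unfolding pm[symmetric] by simp
      also have "\<dots> = pwf N g (\<lambda>j x. if n \<le> j \<and> j < m then qq j x * uu j x else 0)"
        using nm by (intro pwf_restrict[OF g mN]) simp
      finally show ?thesis .
    qed
    have "integral {g n..g m} (\<lambda>x. u x * Q x) = integral UNIV (\<lambda>x. if x \<in> {g n..g m} then u x * Q x else 0)"
      by (rule integral_restrict_UNIV[symmetric])
    also have "\<dots> = integral UNIV (pwf N g (\<lambda>j x. if n \<le> j \<and> j < m then qq j x * uu j x else 0))"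
      by (simp only: r)
    also have "\<dots> = (\<Sum>j\<in>{n..<m}. ?I j (\<lambda>x. qq j x * uu j x))"
      using g mN qq(1) uu(1) by (intro int_restr) (auto intro!: continuous_intros)
    finally show ?thesis .
  qed
  have bd: "(\<Sum>i\<in>{n..<m}. Lim (at_left (g (Suc i))) u * Lim (at_left (g (Suc i))) v
        - Lim (at_right (g i)) u * Lim (at_right (g i)) v)
     = (\<Sum>i\<in>{n..<m}. ?I i (\<lambda>x. deriv (uu i) x * vv i x) + ?I i (\<lambda>x. deriv (vv i) x * uu i x))"
  proof (intro sum.cong refl)
    fix i assume i: "i \<in> {n..<m}"
    then have iN: "i < N" using mN by auto
    have le: "g i \<le> g (Suc i)" using g iN unfolding sgrid_def by (auto intro: less_imp_le)
    have "Lim (at_left (g (Suc i))) u = uu i (g (Suc i))" unfolding uu(2) using lim_left[OF g iN] uu(1) iN by blast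
    moreover have "Lim (at_left (g (Suc i))) v = vv i (g (Suc i))" unfolding vv(2) using lim_left[OF g iN] vv(1) iN by blast
    moreover have "Lim (at_right (g i)) u = uu i (g i)" unfolding uu(2) using lim_right[OF g iN] uu(1) iN by blast
    moreover have "Lim (at_right (g i)) v = vv i (g i)" unfolding vv(2) using lim_right[OF g iN] vv(1) iN by blast
    moreover have "?I i (\<lambda>x. deriv (uu i) x * vv i x) + ?I i (\<lambda>x. deriv (vv i) x * uu i x)
        = uu i (g (Suc i)) * vv i (g (Suc i)) - uu i (g i) * vv i (g i)"
      using ftc_piece[OF le] uu(1) vv(1) iN by blast
    ultimately show "Lim (at_left (g (Suc i))) u * Lim (at_left (g (Suc i))) v
        - Lim (at_right (g i)) u * Lim (at_right (g i)) v
      = ?I i (\<lambda>x. deriv (uu i) x * vv i x) + ?I i (\<lambda>x. deriv (vv i) x * uu i x)" by simp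
  qed
  show ?thesis
    unfolding P_def[symmetric] Q_def[symmetric] lhs rhs bd A B by (simp add: sum.distrib)
qed



theorem mainTheorem13:
  fixes F :: "idx filter"
    and beta eta :: "idx \<Rightarrow> real"
    and ell :: "idx \<Rightarrow> nat"
    and gam :: "idx \<Rightarrow> nat \<Rightarrow> real"
    and u v :: "idx \<Rightarrow> real \<Rightarrow> real"
    and n m :: "idx \<Rightarrow> nat"
  assumes Lambda: "fine_ultrafilter F"
    and beta_inf: "\<forall>r::real. eventually (\<lambda>l. r < beta l) F"
    and eta_infinitesimal: "\<forall>\<epsilon>>0. eventually (\<lambda>l. \<bar>eta l\<bar> < \<epsilon>) F"
    and grid: "eventually (\<lambda>l. gam l 0 = - beta l \<and> gam l (ell l) = beta l \<and>
                  (\<forall>j<ell l. 0 < gam l (Suc j) - gam l j \<and> gam l (Suc j) - gam l j < eta l)) F"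
    and reals_in_grid: "\<forall>r::real. eventually (\<lambda>l. \<exists>j\<le>ell l. gam l j = r) F"
    and u_in: "eventually (\<lambda>l. u l \<in> Ufun l (ell l) (gam l)) F"
    and v_in: "eventually (\<lambda>l. v l \<in> Ufun l (ell l) (gam l)) F"
    and nm: "eventually (\<lambda>l. n l < m l \<and> m l \<le> ell l) F"
  shows "eventually (\<lambda>l.
     integral {gam l (n l)..gam l (m l)} (\<lambda>x. D2 l (ell l) (gam l) (u l) x * v l x)
   = - integral {gam l (n l)..gam l (m l)} (\<lambda>x. u l x * D2 l (ell l) (gam l) (v l) x)
     + (\<Sum>i\<in>{n l..<m l}.
          Lim (at_left (gam l (Suc i))) (u l) * Lim (at_left (gam l (Suc i))) (v l)
        - Lim (at_right (gam l i)) (u l) * Lim (at_right (gam l i)) (v l))) F"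
proof -
  have fin: "eventually finite F" using Lambda unfolding fine_ultrafilter_def by blast
  have "eventually (\<lambda>l. finite l \<and> sgrid (ell l) (gam l) \<and> u l \<in> Ufun l (ell l) (gam l)
      \<and> v l \<in> Ufun l (ell l) (gam l) \<and> n l < m l \<and> m l \<le> ell l) F"
    using fin grid u_in v_in nm by eventually_elim (auto simp: sgrid_def)
  then show ?thesis
    by (rule eventually_mono) (intro level; blast)
qed

end
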